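(* Let $T$ be a tree on $n\ge2$ vertices, $k\ge2$ even, and $M$ the order-$k$ Steiner distance hypermatrix of $T$. For every $\mathbf{c}\in\mathcal{H}_n$, writing $\alpha'_e=\mathbf{c}^T\mathbf{a}'_e$ for $e\in E(T)$, $$M(\mathbf{c},\ldots,\mathbf{c})=-2\sum_{e\in E(T)}(\alpha'_e)^k.$$
   Context: $T$ is a tree with vertex set $\{1,\dots,n\}$ and edge set $E(T)$. For $U\subseteq V(T)$, the Steiner distance $S(U)$ is the minimum number of edges of a connected subgraph of $T$ whose vertex set contains $U$. The order-$k$ Steiner distance hypermatrix $M$ of $T$ has entries $M_{(i_1,\dots,i_k)}=S(\{i_1,\dots,i_k\})$, and $M(\mathbf{x}_1,\dots,\mathbf{x}_k)=\sum_{\mathbf{i}\in V(T)^k}M_{\mathbf{i}}\prod_{j=1}^k x_{j i_j}$. For an edge $e$, $A(e)$ and $B(e)$ are the vertex sets of the two components of $T-e$ (labeled arbitrarily), $\mathbf{a}_e$ is the indicator vector of $A(e)$, $\mathbb{J}$ is the all-ones vector in $\mathbb{R}^n$, and $\mathbf{a}'_e=\mathbf{a}_e-\frac{|A(e)|}{n}\mathbb{J}$. $\mathcal{H}_n=\{\mathbf{c}\in\mathbb{R}^n:\mathbf{c}^T\mathbb{J}=0\}$. *)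

theory Defs
  imports Complex_Main "HOL-Library.FuncSet"
begin

(* Graphs on the vertex set {1..n}: an edge is a 2-element subset of {1..n}. *)

definition adj :: "nat set set \<Rightarrow> nat \<Rightarrow> nat \<Rightarrow> bool" where
  "adj E x y \<longleftrightarrow> {x, y} \<in> E"

definition connected_graph :: "nat set \<Rightarrow> nat set set \<Rightarrow> bool" where
  "connected_graph V E \<longleftrightarrow> (\<forall>x\<in>V. \<forall>y\<in>V. (adj E)\<^sup>*\<^sup>* x y)"

definition is_cycle :: "nat set set \<Rightarrow> nat list \<Rightarrow> bool" where
  "is_cycle E vs \<longleftrightarrow> length vs \<ge> 3 \<and> distinct vs \<and>
     (\<forall>i. Suc i < length vs \<longrightarrow> {vs ! i, vs ! Suc i} \<in> E) \<and> {last vs, hd vs} \<in> E"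

definition is_tree :: "nat \<Rightarrow> nat set set \<Rightarrow> bool" where
  "is_tree n E \<longleftrightarrow> (\<forall>e\<in>E. card e = 2 \<and> e \<subseteq> {1..n})
      \<and> connected_graph {1..n} E \<and> (\<nexists>vs. is_cycle E vs)"

definition steiner_dist :: "nat \<Rightarrow> nat set set \<Rightarrow> nat set \<Rightarrow> nat" where
  "steiner_dist n E U = Min {card E' | E' V'. U \<subseteq> V' \<and> V' \<subseteq> {1..n} \<and> E' \<subseteq> E
       \<and> (\<forall>e\<in>E'. e \<subseteq> V') \<and> connected_graph V' E'}"

(* M(x_1,...,x_k) for the order-k Steiner distance hypermatrix; index tuples are
   functions {0..<k} -> {1..n} *)
definition steiner_form :: "nat \<Rightarrow> nat set set \<Rightarrow> nat \<Rightarrow> (nat \<Rightarrow> nat \<Rightarrow> real) \<Rightarrow> real" where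
  "steiner_form n E k x = (\<Sum>i \<in> {0..<k} \<rightarrow>\<^sub>E {1..n}.
      real (steiner_dist n E (i ` {0..<k})) * (\<Prod>j<k. x j (i j)))"

(* A(e): vertex set of one component of T - e (the one containing the smaller endpoint) *)
definition compA :: "nat \<Rightarrow> nat set set \<Rightarrow> nat set \<Rightarrow> nat set" where
  "compA n E e = {v \<in> {1..n}. (adj (E - {e}))\<^sup>*\<^sup>* (Min e) v}"

(* a'_e = a_e - |A(e)|/n J, as a function on {1..n} *)
definition a_prime :: "nat \<Rightarrow> nat set set \<Rightarrow> nat set \<Rightarrow> nat \<Rightarrow> real" where
  "a_prime n E e v = (if v \<in> compA n E e then 1 else 0) - real (card (compA n E e)) / real n"

end

theory Submission
  imports Defs
begin


lemma adj_sym: "adj E x y = adj E y x"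
  by (simp add: adj_def insert_commute)

lemma rt_sym: "(adj E)\<^sup>*\<^sup>* x y \<Longrightarrow> (adj E)\<^sup>*\<^sup>* y x"
proof (induction rule: rtranclp_induct)
  case base then show ?case by simp
next
  case (step y z)
  then show ?case using adj_sym
    by (metis converse_rtranclp_into_rtranclp)
qed

lemma rt_mono: "(adj E')\<^sup>*\<^sup>* x y \<Longrightarrow> E' \<subseteq> E \<Longrightarrow> (adj E)\<^sup>*\<^sup>* x y"
proof -
  assume "(adj E')\<^sup>*\<^sup>* x y" "E' \<subseteq> E"
  moreover have "\<And>a b. adj E' a b \<Longrightarrow> adj E a b" using \<open>E' \<subseteq> E\<close> by (auto simp: adj_def)
  ultimately show ?thesis by (metis mono_rtranclp)
qed

lemma rtranclp_path:
  "P\<^sup>*\<^sup>* x y \<Longrightarrow> \<exists>vs. vs \<noteq> [] \<and> hd vs = x \<and> last vs = y \<and> distinct vs \<and> successively P vs"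
proof (induction rule: converse_rtranclp_induct)
  case base
  then show ?case by (intro exI[of _ "[y]"]) auto
next
  case (step x z)
  then obtain vs where vs: "vs \<noteq> []" "hd vs = z" "last vs = y" "distinct vs" "successively P vs"
    by blast
  show ?case
  proof (cases "x \<in> set vs")
    case True
    then obtain ys zs where sp: "vs = ys @ x # zs" by (meson split_list)
    show ?thesis
      apply (intro exI[of _ "x # zs"])
      using vs sp by (auto simp: successively_append_iff)
  next
    case False
    show ?thesis
      apply (intro exI[of _ "x # vs"])
      using vs False step(1) by (auto simp: successively_Cons)
  qed
qed

lemma successively_nth: "successively P xs \<Longrightarrow> Suc i < length xs \<Longrightarrow> P (xs ! i) (xs ! Suc i)"
proof (induction P xs arbitrary: i rule: successively.induct)
  case (3 P x y xs)
  then show ?case by (cases i) auto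
qed auto

lemma tree_edge_sep:
  assumes tree: "is_tree n E" and eE: "e \<in> E"
  shows "Min e \<noteq> Max e" "e = {Min e, Max e}" "\<not> (adj (E - {e}))\<^sup>*\<^sup>* (Min e) (Max e)"
proof -
  have c2: "card e = 2" using tree eE unfolding is_tree_def by auto
  then obtain a b where ab: "e = {a, b}" "a \<noteq> b" by (meson card_2_iff)
  show ne: "Min e \<noteq> Max e" using ab by (auto simp: min_def max_def)
  show eq: "e = {Min e, Max e}" using ab by (auto simp: min_def max_def insert_commute)
  show "\<not> (adj (E - {e}))\<^sup>*\<^sup>* (Min e) (Max e)"
  proof
    assume "(adj (E - {e}))\<^sup>*\<^sup>* (Min e) (Max e)"
    then obtain vs where vs: "vs \<noteq> []" "hd vs = Min e" "last vs = Max e" "distinct vs"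
      "successively (adj (E - {e})) vs" using rtranclp_path by metis
    have l2: "length vs \<ge> 2"
    proof (rule ccontr)
      assume "\<not> 2 \<le> length vs"
      then have "length vs = 1" using vs(1) by (cases vs) (auto simp: Suc_le_eq)
      then have "hd vs = last vs" by (cases vs) auto
      then show False using vs ne by simp
    qed
    have l3: "length vs \<ge> 3"
    proof (rule ccontr)
      assume "\<not> 3 \<le> length vs"
      then have "length vs = 2" using l2 by simp
      then obtain p q where "vs = [p, q]"
        by (metis (no_types, lifting) One_nat_def Suc_1 length_0_conv length_Suc_conv)
      then show False using vs eq by (auto simp: adj_def)
    qed
    have "is_cycle E vs"
      unfolding is_cycle_def
    proof (intro conjI allI impI)
      fix i assume "Suc i < length vs"
      then have "adj (E - {e}) (vs ! i) (vs ! Suc i)" using successively_nth vs(5) by blast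
      then show "{vs ! i, vs ! Suc i} \<in> E" by (simp add: adj_def)
    next
      show "{last vs, hd vs} \<in> E" using vs eq eE by (metis insert_commute)
    qed (use l3 vs in auto)
    then show False using tree unfolding is_tree_def by blast
  qed
qed



lemma finite_E: "is_tree n E \<Longrightarrow> finite E"
  unfolding is_tree_def
  by (metis Pow_iff finite_Pow_iff finite_atLeastAtMost finite_subset subsetI)

lemma cross:
  assumes "e \<in> E'" "e = {a, b}" "(adj E')\<^sup>*\<^sup>* x y"
  shows "(adj (E' - {e}))\<^sup>*\<^sup>* x y \<or> ((adj (E' - {e}))\<^sup>*\<^sup>* x a \<and> (adj (E' - {e}))\<^sup>*\<^sup>* b y)
     \<or> ((adj (E' - {e}))\<^sup>*\<^sup>* x b \<and> (adj (E' - {e}))\<^sup>*\<^sup>* a y)"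
  using assms(3)
proof (induction rule: rtranclp_induct)
  case base then show ?case by simp
next
  case (step y z)
  let ?R = "(adj (E' - {e}))\<^sup>*\<^sup>*"
  show ?case
  proof (cases "{y, z} = e")
    case False
    then have "adj (E' - {e}) y z" using step(2) by (simp add: adj_def)
    then show ?thesis using step(3) by (meson rtranclp.rtrancl_into_rtrancl)
  next
    case True
    then have yz: "(y = a \<and> z = b) \<or> (y = b \<and> z = a)" using assms(2) by (metis doubleton_eq_iff)
    have symR: "\<And>p q. ?R p q \<Longrightarrow> ?R q p" by (rule rt_sym)
    show ?thesis using step(3) yz
      by (metis (no_types, lifting) rtranclp.rtrancl_refl rtranclp_trans symR)
  qed
qed

lemma side_pres:
  assumes "(adj (E - {e}))\<^sup>*\<^sup>* x y"
  shows "(adj (E - {e}))\<^sup>*\<^sup>* a x \<longleftrightarrow> (adj (E - {e}))\<^sup>*\<^sup>* a y"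
  using assms rt_sym rtranclp_trans by metis

lemma in_compA: "v \<in> {1..n} \<Longrightarrow> v \<in> compA n E e \<longleftrightarrow> (adj (E - {e}))\<^sup>*\<^sup>* (Min e) v"
  unfolding compA_def by auto

lemma same_side_conn:
  assumes tree: "is_tree n E" and eE: "e \<in> E'" and sub: "E' \<subseteq> E"
    and x: "x \<in> {1..n}" and y: "y \<in> {1..n}"
    and same: "x \<in> compA n E e \<longleftrightarrow> y \<in> compA n E e"
    and conn: "(adj E')\<^sup>*\<^sup>* x y"
  shows "(adj (E' - {e}))\<^sup>*\<^sup>* x y"
proof -
  let ?R = "(adj (E' - {e}))\<^sup>*\<^sup>*"
  let ?RE = "(adj (E - {e}))\<^sup>*\<^sup>*"
  have e: "e \<in> E" using eE sub by blast
  note te = tree_edge_sep[OF tree e]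
  have RRE: "\<And>p q. ?R p q \<Longrightarrow> ?RE p q" using rt_mono sub by blast
  have sm: "?RE (Min e) x \<longleftrightarrow> ?RE (Min e) y" using same in_compA x y by blast
  from cross[OF eE te(2) conn]
  show ?thesis
  proof (elim disjE conjE)
    assume h: "?R x (Min e)" "?R (Max e) y"
    then have "?RE (Min e) x" using RRE rt_sym by blast
    moreover have "\<not> ?RE (Min e) y" using h RRE te(3) rt_sym rtranclp_trans by metis
    ultimately show ?thesis using sm by blast
  next
    assume h: "?R x (Max e)" "?R (Min e) y"
    then have "?RE (Min e) y" using RRE by blast
    moreover have "\<not> ?RE (Min e) x" using h RRE te(3) rt_sym rtranclp_trans by metis
    ultimately show ?thesis using sm by blast
  qed
qed



definition sepE :: "nat \<Rightarrow> nat set set \<Rightarrow> nat set \<Rightarrow> nat set set" where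
  "sepE n E U = {e \<in> E. U \<inter> compA n E e \<noteq> {} \<and> \<not> U \<subseteq> compA n E e}"

definition feas :: "nat \<Rightarrow> nat set set \<Rightarrow> nat set \<Rightarrow> nat set set \<Rightarrow> nat set \<Rightarrow> bool" where
  "feas n E U E' V' \<longleftrightarrow> U \<subseteq> V' \<and> V' \<subseteq> {1..n} \<and> E' \<subseteq> E
       \<and> (\<forall>e\<in>E'. e \<subseteq> V') \<and> connected_graph V' E'"

lemma lower:
  assumes tree: "is_tree n E" and U: "U \<subseteq> {1..n}" and f: "feas n E U E' V'"
  shows "sepE n E U \<subseteq> E'"
proof
  fix e assume "e \<in> sepE n E U"
  then obtain x y where xy: "e \<in> E" "x \<in> U" "x \<in> compA n E e" "y \<in> U" "y \<notin> compA n E e"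
    unfolding sepE_def by blast
  show "e \<in> E'"
  proof (rule ccontr)
    assume ne: "e \<notin> E'"
    have "(adj E')\<^sup>*\<^sup>* x y" using f xy unfolding feas_def connected_graph_def by blast
    moreover have "E' \<subseteq> E - {e}" using f ne unfolding feas_def by blast
    ultimately have r: "(adj (E - {e}))\<^sup>*\<^sup>* x y" using rt_mono by blast
    have xn: "x \<in> {1..n}" "y \<in> {1..n}" using xy U by auto
    have "(adj (E - {e}))\<^sup>*\<^sup>* (Min e) x" using in_compA[OF xn(1)] xy by blast
    then have "(adj (E - {e}))\<^sup>*\<^sup>* (Min e) y" using r by (rule rtranclp_trans)
    then show False using in_compA[OF xn(2)] xy by blast
  qed
qed

lemma reach_sub:
  assumes "(adj F)\<^sup>*\<^sup>* u x" "\<forall>f\<in>F. f \<subseteq> V'" "u \<in> V'"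
  shows "(adj {f \<in> F. f \<subseteq> {v \<in> V'. (adj F)\<^sup>*\<^sup>* u v}})\<^sup>*\<^sup>* u x"
  using assms(1)
proof (induction rule: rtranclp_induct)
  case base then show ?case by simp
next
  case (step y z)
  have "{y, z} \<in> F" using step(2) by (simp add: adj_def)
  then have "{y, z} \<subseteq> {v \<in> V'. (adj F)\<^sup>*\<^sup>* u v}" using assms(2) step(1,2)
    by (auto intro: rtranclp.rtrancl_into_rtrancl)
  then have "adj {f \<in> F. f \<subseteq> {v \<in> V'. (adj F)\<^sup>*\<^sup>* u v}} y z"
    using \<open>{y, z} \<in> F\<close> by (simp add: adj_def)
  then show ?case using step(3) by (meson rtranclp.rtrancl_into_rtrancl)
qed

lemma steiner_eq:
  assumes tree: "is_tree n E" and U: "U \<subseteq> {1..n}" and Une: "U \<noteq> {}"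
  shows "steiner_dist n E U = card (sepE n E U)"
proof -
  have finE: "finite E" using finite_E tree by blast
  define S where "S = {card E' | E' V'. feas n E U E' V'}"
  have sd: "steiner_dist n E U = Min S" unfolding S_def steiner_dist_def feas_def by simp
  have fS: "finite S"
  proof -
    have "S \<subseteq> {0..card E}" unfolding S_def feas_def using finE card_mono by fastforce
    then show ?thesis using finite_subset by blast
  qed
  have feasE: "feas n E U E {1..n}"
    using tree U unfolding feas_def is_tree_def by auto
  then have neS: "S \<noteq> {}" unfolding S_def by blast
  have "Min S \<in> S" by (rule Min_in[OF fS neS])
  then obtain E' V' where f: "feas n E U E' V'" and cm0: "Min S = card E'"
    unfolding S_def by auto
  have cm: "card E' = Min S" using cm0 by simp
  have finE': "finite E'" using f finE finite_subset unfolding feas_def by blast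
  have "E' \<subseteq> sepE n E U"
  proof
    fix e assume eE': "e \<in> E'"
    show "e \<in> sepE n E U"
    proof (rule ccontr)
      assume ns: "e \<notin> sepE n E U"
      have eE: "e \<in> E" using eE' f unfolding feas_def by blast
      have same: "\<And>x y. x \<in> U \<Longrightarrow> y \<in> U \<Longrightarrow> x \<in> compA n E e \<longleftrightarrow> y \<in> compA n E e"
        using ns eE unfolding sepE_def by blast
      obtain u where u: "u \<in> U" using Une by blast
      let ?F = "E' - {e}"
      define V'' where "V'' = {v \<in> V'. (adj ?F)\<^sup>*\<^sup>* u v}"
      define E'' where "E'' = {f \<in> ?F. f \<subseteq> V''}"
      have uV: "u \<in> V'" using u f unfolding feas_def by blast
      have FV: "\<forall>f\<in>?F. f \<subseteq> V'" using f unfolding feas_def by blast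
      have RU: "(adj ?F)\<^sup>*\<^sup>* u x" if "x \<in> U" for x
      proof -
        have "(adj E')\<^sup>*\<^sup>* u x" using f u that unfolding feas_def connected_graph_def by blast
        moreover have "E' \<subseteq> E" using f unfolding feas_def by blast
        moreover have "u \<in> {1..n}" "x \<in> {1..n}" using u that U by auto
        moreover have "u \<in> compA n E e \<longleftrightarrow> x \<in> compA n E e" using same u that by blast
        ultimately show ?thesis using same_side_conn[OF tree eE'] by blast
      qed
      have reach: "(adj E'')\<^sup>*\<^sup>* u x" if "x \<in> V''" for x
        using reach_sub[OF _ FV uV, of x] that unfolding E''_def V''_def by simp
      have "feas n E U E'' V''"
        unfolding feas_def
      proof (intro conjI)
        show "U \<subseteq> V''" using RU f unfolding V''_def feas_def by blast
        show "V'' \<subseteq> {1..n}" using f unfolding V''_def feas_def by blast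
        show "E'' \<subseteq> E" using f unfolding E''_def feas_def by blast
        show "\<forall>e\<in>E''. e \<subseteq> V''" unfolding E''_def by blast
        show "connected_graph V'' E''" unfolding connected_graph_def
        proof (intro ballI)
          fix x y assume "x \<in> V''" "y \<in> V''"
          then have "(adj E'')\<^sup>*\<^sup>* x u" "(adj E'')\<^sup>*\<^sup>* u y" using reach rt_sym by auto
          then show "(adj E'')\<^sup>*\<^sup>* x y" by (rule rtranclp_trans)
        qed
      qed
      then have "card E'' \<in> S" unfolding S_def by blast
      then have "Min S \<le> card E''" using fS Min_le by blast
      moreover have "card E'' < card E'"
      proof -
        have "E'' \<subseteq> E' - {e}" unfolding E''_def by blast
        then have "card E'' \<le> card (E' - {e})" using finE' card_mono by blast
        also have "\<dots> < card E'" by (rule card_Diff1_less[OF finE' eE'])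
        finally show ?thesis .
      qed
      ultimately show False using cm by simp
    qed
  qed
  moreover have "sepE n E U \<subseteq> E'" using lower[OF tree U f] .
  ultimately show ?thesis using sd cm by simp
qed



lemma pow_sum:
  fixes c :: "nat \<Rightarrow> 'b::comm_semiring_1"
  shows "finite S \<Longrightarrow> (\<Sum>i\<in>{0..<k} \<rightarrow>\<^sub>E S. \<Prod>j<k. c (i j)) = (\<Sum>v\<in>S. c v) ^ k"
  using prod_sum_PiE[of "{0..<k}" "\<lambda>_. S" "\<lambda>_ v. c v"]
  by (simp add: atLeast0LessThan)

lemma PiE_sub: "A \<subseteq> B \<Longrightarrow> i \<in> {0..<k} \<rightarrow>\<^sub>E B \<Longrightarrow> (i \<in> {0..<k} \<rightarrow>\<^sub>E A) \<longleftrightarrow> i ` {0..<k} \<subseteq> A"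
  by (auto simp: PiE_def Pi_def)

lemma per_edge:
  fixes c :: "nat \<Rightarrow> real"
  assumes k: "k \<ge> 2" "even k" and A: "A \<subseteq> {1..n}" and c0: "(\<Sum>v=1..n. c v) = 0"
  shows "(\<Sum>i \<in> {0..<k} \<rightarrow>\<^sub>E {1..n}. (if i ` {0..<k} \<inter> A \<noteq> {} \<and> \<not> i ` {0..<k} \<subseteq> A then 1 else 0)
      * (\<Prod>j<k. c (i j))) = - 2 * (\<Sum>v\<in>A. c v) ^ k"
proof -
  let ?P = "{0..<k} \<rightarrow>\<^sub>E {1..n}"
  let ?B = "{1..n} - A"
  let ?f = "\<lambda>i. \<Prod>j<k. c (i j)"
  have finP: "finite ?P" by (simp add: finite_PiE)
  have ind: "(if i ` {0..<k} \<inter> A \<noteq> {} \<and> \<not> i ` {0..<k} \<subseteq> A then 1 else 0) * ?f i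
     = ?f i - (if i \<in> {0..<k} \<rightarrow>\<^sub>E A then ?f i else 0) - (if i \<in> {0..<k} \<rightarrow>\<^sub>E ?B then ?f i else 0)"
    if i: "i \<in> ?P" for i
  proof -
    have ne: "i ` {0..<k} \<noteq> {}" using k by auto
    have sub: "i ` {0..<k} \<subseteq> {1..n}" using i by (auto simp: PiE_def Pi_def)
    have "(i \<in> {0..<k} \<rightarrow>\<^sub>E A) \<longleftrightarrow> i ` {0..<k} \<subseteq> A" using PiE_sub[OF A i] .
    moreover have "(i \<in> {0..<k} \<rightarrow>\<^sub>E ?B) \<longleftrightarrow> i ` {0..<k} \<subseteq> ?B" using PiE_sub[OF _ i] by blast
    moreover have "i ` {0..<k} \<subseteq> ?B \<longleftrightarrow> i ` {0..<k} \<inter> A = {}" using sub by blast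
    ultimately show ?thesis using ne by auto
  qed
  have "(\<Sum>i \<in> ?P. (if i ` {0..<k} \<inter> A \<noteq> {} \<and> \<not> i ` {0..<k} \<subseteq> A then 1 else 0) * ?f i)
     = (\<Sum>i\<in>?P. ?f i) - (\<Sum>i\<in>?P. if i \<in> {0..<k} \<rightarrow>\<^sub>E A then ?f i else 0)
        - (\<Sum>i\<in>?P. if i \<in> {0..<k} \<rightarrow>\<^sub>E ?B then ?f i else 0)"
    using ind by (simp add: sum_subtractf)
  also have "(\<Sum>i\<in>?P. if i \<in> {0..<k} \<rightarrow>\<^sub>E A then ?f i else 0) = (\<Sum>i\<in>{0..<k} \<rightarrow>\<^sub>E A. ?f i)"
  proof -
    have "?P \<inter> ({0..<k} \<rightarrow>\<^sub>E A) = {0..<k} \<rightarrow>\<^sub>E A" using A PiE_mono by blast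
    then show ?thesis using sum.inter_restrict[OF finP, of ?f "{0..<k} \<rightarrow>\<^sub>E A"] by simp
  qed
  also have "(\<Sum>i\<in>?P. if i \<in> {0..<k} \<rightarrow>\<^sub>E ?B then ?f i else 0) = (\<Sum>i\<in>{0..<k} \<rightarrow>\<^sub>E ?B. ?f i)"
  proof -
    have "?P \<inter> ({0..<k} \<rightarrow>\<^sub>E ?B) = {0..<k} \<rightarrow>\<^sub>E ?B" using PiE_mono[of "{0..<k}" "\<lambda>_. ?B" "\<lambda>_. {1..n}"] by blast
    then show ?thesis using sum.inter_restrict[OF finP, of ?f "{0..<k} \<rightarrow>\<^sub>E ?B"] by simp
  qed
  also have "(\<Sum>i\<in>?P. ?f i) = 0" using pow_sum[where S="{1..n}" and k=k and c=c] c0 k by simp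
  also have "(\<Sum>i\<in>{0..<k} \<rightarrow>\<^sub>E A. ?f i) = (\<Sum>v\<in>A. c v) ^ k"
    using pow_sum A finite_subset by blast
  also have "(\<Sum>i\<in>{0..<k} \<rightarrow>\<^sub>E ?B. ?f i) = (\<Sum>v\<in>?B. c v) ^ k"
    using pow_sum by blast
  also have "(\<Sum>v\<in>?B. c v) = - (\<Sum>v\<in>A. c v)"
    using sum.subset_diff[of A "{1..n}" c] A c0 by simp
  finally show ?thesis using k by simp
qed

lemma alpha:
  fixes c :: "nat \<Rightarrow> real"
  assumes A: "compA n E e \<subseteq> {1..n}" and c0: "(\<Sum>v=1..n. c v) = 0"
  shows "(\<Sum>v=1..n. c v * a_prime n E e v) = (\<Sum>v\<in>compA n E e. c v)"
proof -
  have "(\<Sum>v=1..n. c v * a_prime n E e v) = (\<Sum>v=1..n. (if v \<in> compA n E e then c v else 0))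
     - real (card (compA n E e)) / real n * (\<Sum>v=1..n. c v)"
  proof -
    have "\<And>v. c v * a_prime n E e v = (if v \<in> compA n E e then c v else 0)
        - c v * (real (card (compA n E e)) / real n)"
      by (simp add: a_prime_def algebra_simps)
    then have "(\<Sum>v=1..n. c v * a_prime n E e v) = (\<Sum>v=1..n. (if v \<in> compA n E e then c v else 0))
        - (\<Sum>v=1..n. c v * (real (card (compA n E e)) / real n))"
      by (simp add: sum_subtractf)
    moreover have "(\<Sum>v=1..n. c v * (real (card (compA n E e)) / real n))
       = (\<Sum>v=1..n. c v) * (real (card (compA n E e)) / real n)"
      by (rule sum_distrib_right[symmetric])
    ultimately show ?thesis by simp

  qed
  also have "(\<Sum>v=1..n. (if v \<in> compA n E e then c v else 0)) = (\<Sum>v\<in>compA n E e. c v)"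
  proof -
    have "{1..n} \<inter> compA n E e = compA n E e" using A by blast
    then show ?thesis using sum.inter_restrict[of "{1..n}" c "compA n E e"] by simp
  qed
  finally show ?thesis using c0 by simp
qed

theorem mainTheorem2:
  fixes n k :: nat and E :: "nat set set" and c :: "nat \<Rightarrow> real"
  assumes "n \<ge> 2" and "is_tree n E" and "k \<ge> 2" and "even k"
    and "(\<Sum>v=1..n. c v) = 0"
  shows "steiner_form n E k (\<lambda>_. c) =
     - 2 * (\<Sum>e\<in>E. (\<Sum>v=1..n. c v * a_prime n E e v) ^ k)"
proof -
  let ?P = "{0..<k} \<rightarrow>\<^sub>E {1..n}"
  let ?f = "\<lambda>i. \<Prod>j<k. c (i j)"
  let ?ind = "\<lambda>i e. (if i ` {0..<k} \<inter> compA n E e \<noteq> {} \<and> \<not> i ` {0..<k} \<subseteq> compA n E e then 1 else 0 :: real)"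
  have finE: "finite E" using finite_E assms(2) by blast
  have cA: "\<And>e. compA n E e \<subseteq> {1..n}" unfolding compA_def by blast
  have "steiner_form n E k (\<lambda>_. c) = (\<Sum>i\<in>?P. (\<Sum>e\<in>E. ?ind i e) * ?f i)"
    unfolding steiner_form_def
  proof (rule sum.cong[OF refl])
    fix i assume i: "i \<in> ?P"
    have sub: "i ` {0..<k} \<subseteq> {1..n}" using i by (auto simp: PiE_def Pi_def)
    have ne: "i ` {0..<k} \<noteq> {}" using assms(3) by auto
    have "real (steiner_dist n E (i ` {0..<k})) = real (card (sepE n E (i ` {0..<k})))"
      using steiner_eq[OF assms(2) sub ne] by simp
    also have "\<dots> = (\<Sum>e\<in>E. ?ind i e)"
      unfolding sepE_def using sum.inter_filter[OF finE, of "\<lambda>_. 1::real"] by simp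
    finally show "real (steiner_dist n E (i ` {0..<k})) * ?f i = (\<Sum>e\<in>E. ?ind i e) * ?f i"
      by simp
  qed
  also have "\<dots> = (\<Sum>e\<in>E. \<Sum>i\<in>?P. ?ind i e * ?f i)"
    unfolding sum_distrib_right by (rule sum.swap)
  also have "\<dots> = (\<Sum>e\<in>E. - 2 * (\<Sum>v\<in>compA n E e. c v) ^ k)"
    by (rule sum.cong[OF refl], rule per_edge[OF assms(3,4) cA assms(5)])
  also have "\<dots> = - 2 * (\<Sum>e\<in>E. (\<Sum>v=1..n. c v * a_prime n E e v) ^ k)"
    unfolding sum_distrib_left using alpha[OF cA assms(5)] by simp
  finally show ?thesis .
qed

end
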